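(* Let $[\alpha]_{K\times K}\in\mathcal A_{\mathrm{SLS}}$. Then for every subset $S\subseteq[K]$ there exists a p-optimal cyclic partition of $S$, i.e., disjoint cycles $\pi_1,\dots,\pi_n$ with $\bigcup_{l=1}^n\{\pi_l\}=S$ and $\mathcal D_{\Sigma,\mathrm{P\text{-}TIN}}(S)=\Delta_{\pi_1}+\cdots+\Delta_{\pi_n}$.
   Context: $[\alpha]_{K\times K}$ is a matrix of nonnegative reals. SLS regime: $\mathcal A_{\mathrm{SLS}}=\{[\alpha]\in\mathbb R_+^{K\times K}:\ \alpha_{ii}\ge\max(\alpha_{ij},\alpha_{ki},\alpha_{ik}+\alpha_{ji}-\alpha_{jk})\ \forall i,j,k\in[K],\ i\notin\{j,k\}\}$. Cycles: a cycle $\pi=(i_1\to\cdots\to i_M)$, $M\ge1$, is an ordered list of distinct indices of $[K]$, read cyclically ($i_{M+1}=i_1$); $\{\pi\}=\{i_1,\dots,i_M\}$; $\Pi$ is the set of all cycles; cycles are disjoint if their sets are disjoint; a cyclic partition of $S$ is a collection of disjoint cycles whose sets have union $S$. $\delta_{ij}=\alpha_{ii}-\alpha_{ji}$ ($i\neq j$), $\delta_{ii}=0$; $\Delta_\pi=\sum_{m=1}^M\delta_{i_mi_{m+1}}$ if $M>1$, $\Delta_\pi=\alpha_{i_1i_1}$ if $M=1$. For $S\subseteq[K]$, $\mathcal D_{\mathrm{P\text{-}TIN}}(S)=\{(d_k)_{k\in[K]}\in\mathbb R^K: d_k=0\ (k\notin S),\ d_k\ge0\ (k\in S),\ \sum_{k\in\{\pi\}}d_k\le\Delta_\pi\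 \forall \pi\in\Pi \text{ with } \{\pi\}\subseteq S\}$, and $\mathcal D_{\Sigma,\mathrm{P\text{-}TIN}}(S)=\max_{d\in\mathcal D_{\mathrm{P\text{-}TIN}}(S)}\sum_{k\in S}d_k$. *)

theory Defs
  imports "HOL-Analysis.Analysis"
begin

text \<open>Indices [K] are represented as {..<K}; the matrix as alpha :: nat => nat => real.\<close>

definition SLS :: "nat \<Rightarrow> (nat \<Rightarrow> nat \<Rightarrow> real) \<Rightarrow> bool" where
  "SLS K alpha \<longleftrightarrow>
     (\<forall>i<K. \<forall>j<K. alpha i j \<ge> 0) \<and>
     (\<forall>i<K. \<forall>j<K. \<forall>k<K. i \<noteq> j \<and> i \<noteq> k \<longrightarrow>
        alpha i i \<ge> max (alpha i j) (max (alpha k i) (alpha i k + alpha j i - alpha j k)))"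

text \<open>A cycle (i_1 -> ... -> i_M) is a nonempty list of distinct indices, read cyclically.\<close>
definition is_cycle :: "nat \<Rightarrow> nat list \<Rightarrow> bool" where
  "is_cycle K c \<longleftrightarrow> c \<noteq> [] \<and> distinct c \<and> set c \<subseteq> {..<K}"

definition delta :: "(nat \<Rightarrow> nat \<Rightarrow> real) \<Rightarrow> nat \<Rightarrow> nat \<Rightarrow> real" where
  "delta alpha i j = (if i = j then 0 else alpha i i - alpha j i)"

definition Delta :: "(nat \<Rightarrow> nat \<Rightarrow> real) \<Rightarrow> nat list \<Rightarrow> real" where
  "Delta alpha c =
     (if length c = 1 then alpha (c ! 0) (c ! 0)
      else (\<Sum>m<length c. delta alpha (c ! m) (c ! ((m + 1) mod length c))))"

text \<open>The polytope D_{P-TIN}(S); vectors in R^K are functions nat => real that vanish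
  outside S (in particular outside [K]).\<close>
definition D_PTIN :: "nat \<Rightarrow> (nat \<Rightarrow> nat \<Rightarrow> real) \<Rightarrow> nat set \<Rightarrow> (nat \<Rightarrow> real) set" where
  "D_PTIN K alpha S =
     {d. (\<forall>k. k \<notin> S \<longrightarrow> d k = 0) \<and> (\<forall>k\<in>S. d k \<ge> 0) \<and>
         (\<forall>c. is_cycle K c \<and> set c \<subseteq> S \<longrightarrow> (\<Sum>k\<in>set c. d k) \<le> Delta alpha c)}"

definition D_Sigma_PTIN :: "nat \<Rightarrow> (nat \<Rightarrow> nat \<Rightarrow> real) \<Rightarrow> nat set \<Rightarrow> real" where
  "D_Sigma_PTIN K alpha S = (GREATEST v. v \<in> (\<lambda>d. \<Sum>k\<in>S. d k) ` D_PTIN K alpha S)"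

definition cyclic_partition :: "nat \<Rightarrow> nat set \<Rightarrow> nat list list \<Rightarrow> bool" where
  "cyclic_partition K S P \<longleftrightarrow>
     (\<forall>c\<in>set P. is_cycle K c) \<and>
     (\<forall>a<length P. \<forall>b<length P. a \<noteq> b \<longrightarrow> set (P ! a) \<inter> set (P ! b) = {}) \<and>
     (\<Union>c\<in>set P. set c) = S"

end

theory Submission
  imports Defs "HOL-Combinatorics.Cycles"
begin

definition cst :: "(nat \<Rightarrow> nat \<Rightarrow> real) \<Rightarrow> nat \<Rightarrow> nat \<Rightarrow> real" where
  "cst alpha i j = (if i = j then alpha i i else alpha i i - alpha j i)"

fun pwf :: "('a \<Rightarrow> 'a \<Rightarrow> real) \<Rightarrow> 'a list \<Rightarrow> real" where
  "pwf h (x # y # r) = h x y + pwf h (y # r)"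
| "pwf h _ = 0"

lemma pwf_cyc: "pwf h (x#xs) + h (last (x#xs)) y = sum_list (map2 h (x#xs) (xs @ [y]))"
  by (induct xs arbitrary: x) auto

lemma pwf_append: "pwf h (A @ i # B) = pwf h (A @ [i]) + pwf h (i # B)"
proof (induct A)
  case Nil then show ?case by simp
next
  case (Cons a A) then show ?case by (cases A) auto
qed

lemma sum_list_rotate1: "sum_list (rotate1 xs) = sum_list (xs::real list)"
  by (cases xs) auto

lemma map2_same: "map2 f xs (map g xs) = map (\<lambda>y. f y (g y)) xs"
  by (induct xs) auto

lemma sum_list_map2_add:
  "length xs = length ys \<Longrightarrow>
   sum_list (map2 (\<lambda>i j. (u i::real) + v j) xs ys) = sum_list (map u xs) + sum_list (map v ys)"
  by (induct xs ys rule: list_induct2) auto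

lemma Delta_eq:
  assumes "distinct cl" "cl \<noteq> []"
  shows "Delta alpha cl = sum_list (map2 (cst alpha) cl (rotate1 cl))"
proof (cases "length cl = 1")
  case True
  then obtain a where "cl = [a]" by (metis One_nat_def length_0_conv length_Suc_conv)
  then show ?thesis by (simp add: Delta_def cst_def)
next
  case False
  let ?n = "length cl"
  have n2: "?n \<ge> 2" using False assms(2) by (metis One_nat_def Suc_1 le_SucE length_0_conv less_one not_less not_less_eq_eq)
  have "sum_list (map2 (cst alpha) cl (rotate1 cl))
      = (\<Sum>m<?n. cst alpha (cl ! m) (rotate1 cl ! m))"
    by (simp add: sum_list_sum_nth atLeast0LessThan)
  also have "\<dots> = (\<Sum>m<?n. delta alpha (cl ! m) (cl ! ((m + 1) mod ?n)))"
  proof (rule sum.cong[OF refl])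
    fix m assume m: "m \<in> {..<?n}"
    have ne: "m \<noteq> (m + 1) mod ?n"
    proof (cases "m + 1 < ?n")
      case True then show ?thesis by simp
    next
      case False
      then have "m + 1 = ?n" using m by simp
      then show ?thesis using n2 by simp
    qed
    have "cl ! m \<noteq> cl ! ((m + 1) mod ?n)"
    proof -
      have "(m + 1) mod ?n < ?n" using n2 by (intro mod_less_divisor) linarith
      then show ?thesis using nth_eq_iff_index_eq[OF assms(1), of m "(m + 1) mod ?n"] ne m by simp
    qed
    then show "cst alpha (cl ! m) (rotate1 cl ! m) = delta alpha (cl ! m) (cl ! ((m + 1) mod ?n))"
      using m by (simp add: nth_rotate1 cst_def delta_def)
  qed
  finally show ?thesis using False by (simp add: Delta_def)
qed


lemma decomp:
  assumes "finite T" "\<sigma> permutes T"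
  shows "\<exists>P. (\<forall>cl\<in>set P. cl \<noteq> [] \<and> distinct cl) \<and>
    (\<forall>a<length P. \<forall>b<length P. a \<noteq> b \<longrightarrow> set (P!a) \<inter> set (P!b) = {}) \<and>
    (\<Union>cl\<in>set P. set cl) = T \<and>
    (\<Sum>l<length P. Delta alpha (P!l)) = (\<Sum>y\<in>T. cst alpha y (\<sigma> y))"
  using assms
proof (induct "card T" arbitrary: T \<sigma> rule: less_induct)
  case less
  show ?case
  proof (cases "T = {}")
    case True
    then show ?thesis by (intro exI[of _ "[]"]) auto
  next
    case False
    then obtain a where a: "a \<in> T" by blast
    have perm: "permutation \<sigma>" using less(2,3) permutation_permutes by blast
    define cl where "cl = support \<sigma> a"
    have dist: "distinct cl" unfolding cl_def by (rule cycle_of_permutation[OF perm])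
    have lp: "least_power \<sigma> a > 0" using least_power_of_permutation(2)[OF perm] .
    have acl: "a \<in> set cl"
    proof -
      have "cl ! 0 = a" "0 < length cl" unfolding cl_def using lp by simp_all
      then show ?thesis using nth_mem by metis
    qed
    have clT: "set cl \<subseteq> T"
    proof
      fix y assume "y \<in> set cl"
      then obtain i where "y = (\<sigma> ^^ i) a" unfolding cl_def by auto
      then show "y \<in> T" using permutes_in_image[OF permutes_funpow[OF less(3)]] a by blast
    qed
    define \<sigma>' where "\<sigma>' = (\<lambda>y. if y \<in> T - set cl then \<sigma> y else y)"
    have perm': "\<sigma>' permutes (T - set cl)" unfolding \<sigma>'_def cl_def
      by (rule semidecomposition[OF less(3,2)])
    have card: "card (T - set cl) < card T"
    proof -
      have "T - set cl \<subset> T" using acl a by blast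
      then show ?thesis by (rule psubset_card_mono[OF less(2)])
    qed
    obtain P' where P': "(\<forall>cl\<in>set P'. cl \<noteq> [] \<and> distinct cl)"
      "(\<forall>a<length P'. \<forall>b<length P'. a \<noteq> b \<longrightarrow> set (P'!a) \<inter> set (P'!b) = {})"
      "(\<Union>cl\<in>set P'. set cl) = T - set cl"
      "(\<Sum>l<length P'. Delta alpha (P'!l)) = (\<Sum>y\<in>T - set cl. cst alpha y (\<sigma>' y))"
      using less(1)[OF card _ perm'] less(2) by blast
    have mapcl: "map \<sigma> cl = rotate1 cl"
    proof -
      have "map (cycle_of_list cl) cl = rotate1 cl" using cyclic_rotation[OF dist, of 1] by simp
      moreover have "map \<sigma> cl = map (cycle_of_list cl) cl"
        using cycle_restrict[OF perm] unfolding cl_def by (intro map_cong) auto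
      ultimately show ?thesis by simp
    qed
    have Dcl: "Delta alpha cl = (\<Sum>y\<in>set cl. cst alpha y (\<sigma> y))"
    proof -
      have "Delta alpha cl = sum_list (map2 (cst alpha) cl (rotate1 cl))"
      proof -
        have "cl \<noteq> []" using acl by auto
        then show ?thesis by (rule Delta_eq[OF dist])
      qed
      also have "\<dots> = sum_list (map (\<lambda>y. cst alpha y (\<sigma> y)) cl)"
        by (simp add: mapcl[symmetric] map2_same)
      also have "\<dots> = (\<Sum>y\<in>set cl. cst alpha y (\<sigma> y))"
        by (rule sum_list_distinct_conv_sum_set[OF dist])
      finally show ?thesis .
    qed
    have sub: "\<forall>j<length P'. set (P'!j) \<subseteq> T - set cl" using P'(3) nth_mem by blast
    have sum_eq: "(\<Sum>y\<in>T - set cl. cst alpha y (\<sigma>' y)) = (\<Sum>y\<in>T - set cl. cst alpha y (\<sigma> y))"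
      by (rule sum.cong) (auto simp: \<sigma>'_def)
    have "(\<Sum>l<length (cl # P'). Delta alpha ((cl # P')!l))
        = Delta alpha cl + (\<Sum>l<length P'. Delta alpha (P'!l))"
      by (simp only: length_Cons sum.lessThan_Suc_shift nth_Cons_0 nth_Cons_Suc)
    also have "\<dots> = (\<Sum>y\<in>T. cst alpha y (\<sigma> y))"
      using P'(4) sum_eq Dcl sum.subset_diff[OF clT less(2), of "\<lambda>y. cst alpha y (\<sigma> y)"] by simp
    finally have S1: "(\<Sum>l<length (cl # P'). Delta alpha ((cl # P')!l)) = (\<Sum>y\<in>T. cst alpha y (\<sigma> y))" .
    have disj: "\<forall>a<length (cl # P'). \<forall>b<length (cl # P'). a \<noteq> b \<longrightarrow>
        set ((cl # P')!a) \<inter> set ((cl # P')!b) = {}"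
    proof (intro allI impI)
      fix i j assume ij: "i < length (cl # P')" "j < length (cl # P')" "i \<noteq> j"
      show "set ((cl # P')!i) \<inter> set ((cl # P')!j) = {}"
      proof (cases i)
        case 0
        then obtain j' where "j = Suc j'" "j' < length P'" using ij by (cases j) auto
        then show ?thesis using sub 0 by auto
      next
        case (Suc i')
        show ?thesis
        proof (cases j)
          case 0 then show ?thesis using sub Suc ij by auto
        next
          case (Suc j') then show ?thesis using P'(2) \<open>i = Suc i'\<close> ij by auto
        qed
      qed
    qed
    have c1: "\<forall>c\<in>set (cl # P'). c \<noteq> [] \<and> distinct c" using P'(1) dist acl by auto
    have c3: "(\<Union>c\<in>set (cl # P'). set c) = T" using P'(3) clT by auto
    show ?thesis using c1 disj c3 S1 by blast
  qed
qed

locale sls_setup =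
  fixes K :: nat and alpha :: "nat \<Rightarrow> nat \<Rightarrow> real" and S :: "nat set"
  assumes sls: "SLS K alpha" and SK: "S \<subseteq> {..<K}"
begin

abbreviation c where "c \<equiv> cst alpha"

lemma finS: "finite S" using SK finite_lessThan finite_subset by blast

lemma c_nonneg: assumes "i \<in> S" "j \<in> S" shows "0 \<le> c i j"
proof -
  have i: "i < K" and j: "j < K" using assms SK by auto
  show ?thesis
  proof (cases "i = j")
    case True
    then show ?thesis using sls i by (simp add: SLS_def cst_def)
  next
    case False
    have "alpha i i \<ge> max (alpha i j) (max (alpha j i) (alpha i j + alpha j i - alpha j j))"
      using sls i j False unfolding SLS_def by blast
    then show ?thesis using False by (simp add: cst_def)
  qed
qed

lemma tri:
  assumes "x \<in> S" "n \<in> S" "z \<in> S" "x \<noteq> z \<or> n = x \<or> n = z"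
  shows "c x z \<le> c x n + c n z"
proof -
  consider "n = x" | "n = z" | "n \<noteq> x" "n \<noteq> z" "x \<noteq> z" using assms(4) by blast
  then show ?thesis
  proof cases
    case 1 then show ?thesis using c_nonneg[of x x] assms by simp
  next
    case 2 then show ?thesis using c_nonneg[of z z] assms by simp
  next
    case 3
    have "alpha n n \<ge> max (alpha n z) (max (alpha x n) (alpha n x + alpha z n - alpha z x))"
      using sls assms(1-3) SK 3 unfolding SLS_def by blast
    then show ?thesis using 3 by (simp add: cst_def)
  qed
qed

definition cost :: "(nat \<Rightarrow> nat) \<Rightarrow> real" where "cost \<sigma> = (\<Sum>y\<in>S. c y (\<sigma> y))"

lemma upper:
  assumes cp: "cyclic_partition K S P" and d: "d \<in> D_PTIN K alpha S"
  shows "(\<Sum>k\<in>S. d k) \<le> (\<Sum>l<length P. Delta alpha (P!l))"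
proof -
  have cyc: "\<forall>c\<in>set P. is_cycle K c"
    and dj: "\<forall>a<length P. \<forall>b<length P. a \<noteq> b \<longrightarrow> set (P ! a) \<inter> set (P ! b) = {}"
    and un: "(\<Union>c\<in>set P. set c) = S" using cp by (auto simp: cyclic_partition_def)
  have SU: "S = (\<Union>l\<in>{..<length P}. set (P!l))"
    using un by (auto simp: set_conv_nth)
  have "(\<Sum>k\<in>S. d k) = (\<Sum>l<length P. \<Sum>k\<in>set (P!l). d k)"
    unfolding SU by (rule sum.UNION_disjoint) (use dj in auto)
  also have "\<dots> \<le> (\<Sum>l<length P. Delta alpha (P!l))"
  proof (rule sum_mono)
    fix l assume l: "l \<in> {..<length P}"
    have "is_cycle K (P!l)" using cyc l by auto
    moreover have "set (P!l) \<subseteq> S" using un l by auto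
    ultimately show "(\<Sum>k\<in>set (P!l). d k) \<le> Delta alpha (P!l)"
      using d by (auto simp: D_PTIN_def)
  qed
  finally show ?thesis .
qed

end

locale sls_opt = sls_setup +
  fixes \<sigma>0 :: "nat \<Rightarrow> nat"
  assumes perm0: "\<sigma>0 permutes S" and opt: "\<And>\<tau>. \<tau> permutes S \<Longrightarrow> cost \<sigma>0 \<le> cost \<tau>"
begin

definition W :: "nat \<Rightarrow> nat \<Rightarrow> real" where "W a b = c a (\<sigma>0 b) - c b (\<sigma>0 b)"

lemma W_self[simp]: "W a a = 0" by (simp add: W_def)

lemma cyc_nonneg:
  assumes "distinct z" "z \<noteq> []" "set z \<subseteq> S"
  shows "0 \<le> pwf W z + W (last z) (hd z)"
proof -
  define \<rho> where "\<rho> = cycle_of_list z"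
  have rp: "\<rho> permutes set z" unfolding \<rho>_def by (rule cycle_permutes)
  have rot: "map \<rho> z = rotate1 z" using cyclic_rotation[OF assms(1), of 1] by (simp add: \<rho>_def)
  obtain x xs where z: "z = x # xs" using assms(2) by (cases z) auto
  have e1: "pwf W z + W (last z) (hd z) = sum_list (map2 W z (rotate1 z))"
    using pwf_cyc[of W x xs x] z by simp
  also have "\<dots> = sum_list (map (\<lambda>y. W y (\<rho> y)) z)" by (simp add: rot[symmetric] map2_same)
  also have "\<dots> = (\<Sum>y\<in>set z. W y (\<rho> y))" by (rule sum_list_distinct_conv_sum_set[OF assms(1)])
  also have "\<dots> = (\<Sum>y\<in>set z. c y (\<sigma>0 (\<rho> y))) - (\<Sum>y\<in>set z. c (\<rho> y) (\<sigma>0 (\<rho> y)))"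
    by (simp add: W_def sum_subtractf)
  also have "(\<Sum>y\<in>set z. c (\<rho> y) (\<sigma>0 (\<rho> y))) = (\<Sum>y\<in>set z. c y (\<sigma>0 y))"
    using sum.reindex_bij_betw[OF permutes_imp_bij[OF rp], of "\<lambda>y. c y (\<sigma>0 y)"] .
  finally have e2: "pwf W z + W (last z) (hd z) = (\<Sum>y\<in>set z. c y (\<sigma>0 (\<rho> y))) - (\<Sum>y\<in>set z. c y (\<sigma>0 y))" .
  have "cost (\<sigma>0 \<circ> \<rho>) - cost \<sigma>0 = (\<Sum>y\<in>S. c y ((\<sigma>0 \<circ> \<rho>) y) - c y (\<sigma>0 y))"
    by (simp add: cost_def sum_subtractf)
  also have "\<dots> = (\<Sum>y\<in>set z. c y ((\<sigma>0 \<circ> \<rho>) y) - c y (\<sigma>0 y))"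
    by (rule sum.mono_neutral_right[OF finS assms(3)]) (auto simp: permutes_not_in[OF rp])
  finally have e3: "cost (\<sigma>0 \<circ> \<rho>) - cost \<sigma>0 = (\<Sum>y\<in>set z. c y (\<sigma>0 (\<rho> y))) - (\<Sum>y\<in>set z. c y (\<sigma>0 y))"
    by (simp add: sum_subtractf)
  have "cost \<sigma>0 \<le> cost (\<sigma>0 \<circ> \<rho>)"
    using opt[OF permutes_compose[OF permutes_subset[OF rp assms(3)] perm0]] .
  then show ?thesis using e2 e3 by linarith
qed

definition Paths :: "nat \<Rightarrow> nat list set" where
  "Paths i = {l. distinct l \<and> set l \<subseteq> S \<and> l \<noteq> [] \<and> hd l = i}"

lemma Paths_finite: "finite (Paths i)"
proof (rule finite_subset[OF _ finite_lists_length_le[OF finS, of "card S"]])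
  show "Paths i \<subseteq> {xs. set xs \<subseteq> S \<and> length xs \<le> card S}"
    using finS by (auto simp: Paths_def distinct_card[symmetric] intro: card_mono)
qed

definition u :: "nat \<Rightarrow> real" where "u i = Min (pwf W ` Paths i)"

lemma u_le: "l \<in> Paths i \<Longrightarrow> u i \<le> pwf W l"
  unfolding u_def by (rule Min_le) (auto simp: Paths_finite)

lemma u_ex: assumes "i \<in> S" shows "\<exists>l\<in>Paths i. u i = pwf W l"
proof -
  have "[i] \<in> Paths i" using assms by (auto simp: Paths_def)
  then have "u i \<in> pwf W ` Paths i" unfolding u_def by (intro Min_in) (auto simp: Paths_finite)
  then show ?thesis by auto
qed

lemma u_le0: "i \<in> S \<Longrightarrow> u i \<le> 0"
  using u_le[of "[i]" i] by (auto simp: Paths_def)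

lemma path_bound:
  assumes "l \<in> Paths y" "i \<in> S"
  shows "u i \<le> W i y + pwf W l"
proof (cases "i \<in> set l")
  case False
  have "i # l \<in> Paths i" using assms False by (auto simp: Paths_def)
  moreover obtain r where "l = y # r" using assms by (cases l) (auto simp: Paths_def)
  ultimately show ?thesis using u_le[of "i # l" i] by simp
next
  case True
  then obtain A B where l: "l = A @ i # B" by (meson split_list)
  have dl: "distinct l" "set l \<subseteq> S" "hd l = y" using assms by (auto simp: Paths_def)
  show ?thesis
  proof (cases "A = []")
    case True
    then have "i = y" using dl l by auto
    then show ?thesis using u_le[OF assms(1)] by simp
  next
    case False
    have "i # B \<in> Paths i" using dl l by (auto simp: Paths_def)
    then have "u i \<le> pwf W (i # B)" by (rule u_le)
    moreover have "0 \<le> pwf W (A @ [i]) + W (last (A @ [i])) (hd (A @ [i]))"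
      by (rule cyc_nonneg) (use dl l in auto)
    moreover have "hd (A @ [i]) = y" using dl l False by simp
    moreover have "pwf W l = pwf W (A @ [i]) + pwf W (i # B)" using l pwf_append by simp
    ultimately show ?thesis by simp
  qed
qed

lemma pot: assumes "i \<in> S" "y \<in> S" shows "u i \<le> u y + W i y"
proof -
  obtain l where l: "l \<in> Paths y" "u y = pwf W l" using u_ex[OF assms(2)] by blast
  show ?thesis using path_bound[OF l(1) assms(1)] l(2) by simp
qed

definition v :: "nat \<Rightarrow> real" where "v j = c (inv \<sigma>0 j) j - u (inv \<sigma>0 j)"

lemma inv_in: "j \<in> S \<Longrightarrow> inv \<sigma>0 j \<in> S"
  using permutes_in_image[OF permutes_inv[OF perm0]] by blast

lemma sig_in: "j \<in> S \<Longrightarrow> \<sigma>0 j \<in> S"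
  using permutes_in_image[OF perm0] by blast

lemma uv: assumes "i \<in> S" "j \<in> S" shows "u i + v j \<le> c i j"
proof -
  define y where "y = inv \<sigma>0 j"
  have y: "y \<in> S" "\<sigma>0 y = j" using inv_in[OF assms(2)] permutes_inverses[OF perm0] by (auto simp: y_def)
  show ?thesis using pot[OF assms(1) y(1)] y by (simp add: W_def v_def y_def[symmetric])
qed

lemma d_nonneg: assumes k: "k \<in> S" shows "0 \<le> u k + v k"
proof -
  define p where "p = inv \<sigma>0 k"
  have p: "p \<in> S" "\<sigma>0 p = k" using inv_in[OF k] permutes_inverses[OF perm0] by (auto simp: p_def)
  have vk: "v k = c p k - u p" by (simp add: v_def p_def)
  have sk: "\<sigma>0 k \<in> S" using sig_in k by blast
  consider "p = k" | "\<sigma>0 k \<noteq> p" "p \<noteq> k" | "\<sigma>0 k = p" "p \<noteq> k" by blast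
  then show ?thesis
  proof cases
    case 1 then show ?thesis using vk c_nonneg[OF k k] by simp
  next
    case 2
    have "u p \<le> u k + W p k" by (rule pot[OF p(1) k])
    moreover have "c p (\<sigma>0 k) \<le> c p k + c k (\<sigma>0 k)" by (rule tri) (use p k sk 2 in auto)
    ultimately show ?thesis using vk by (simp add: W_def)
  next
    case 3
    obtain l where l: "l \<in> Paths k" "u k = pwf W l" using u_ex[OF k] by blast
    then obtain t where lt: "l = k # t" by (cases l) (auto simp: Paths_def)
    show ?thesis
    proof (cases t)
      case Nil
      then have "u k = 0" using l lt by simp
      then show ?thesis using vk u_le0[OF p(1)] c_nonneg[OF p(1) k] by simp
    next
      case (Cons x r)
      have xr: "x # r \<in> Paths x" "x \<noteq> k" "x \<in> S" using l lt Cons by (auto simp: Paths_def)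
      have uk: "u k = W k x + pwf W (x # r)" using l lt Cons by simp
      have up: "u p \<le> W p x + pwf W (x # r)" by (rule path_bound[OF xr(1) p(1)])
      have "\<sigma>0 x \<noteq> p"
      proof
        assume "\<sigma>0 x = p"
        then have "\<sigma>0 x = \<sigma>0 k" using 3 by simp
        then have "x = k" using permutes_inj[OF perm0] by (auto dest: injD)
        then show False using xr by simp
      qed
      moreover have "\<sigma>0 x \<in> S" using sig_in xr by blast
      ultimately have "c p (\<sigma>0 x) \<le> c p k + c k (\<sigma>0 x)" using tri[OF p(1) k] by blast
      then show ?thesis using vk uk up by (simp add: W_def)
    qed
  qed
qed

definition dd :: "nat \<Rightarrow> real" where "dd k = (if k \<in> S then u k + v k else 0)"

lemma dd_sum: "(\<Sum>k\<in>S. dd k) = cost \<sigma>0"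
proof -
  have "(\<Sum>k\<in>S. dd k) = (\<Sum>k\<in>S. u k) + (\<Sum>k\<in>S. c (inv \<sigma>0 k) k) - (\<Sum>k\<in>S. u (inv \<sigma>0 k))"
    by (simp add: dd_def v_def sum.distrib sum_subtractf)
  also have "(\<Sum>k\<in>S. u (inv \<sigma>0 k)) = (\<Sum>k\<in>S. u k)"
    by (rule sum.reindex_bij_betw[OF permutes_imp_bij[OF permutes_inv[OF perm0]]])
  also have "(\<Sum>k\<in>S. c (inv \<sigma>0 k) k) = (\<Sum>y\<in>S. c (inv \<sigma>0 (\<sigma>0 y)) (\<sigma>0 y))"
    by (rule sum.reindex_bij_betw[OF permutes_imp_bij[OF perm0], symmetric])
  also have "\<dots> = cost \<sigma>0" by (simp add: cost_def permutes_inverses[OF perm0])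
  finally show ?thesis by simp
qed

lemma dd_in: "dd \<in> D_PTIN K alpha S"
proof -
  have "(\<Sum>k\<in>set cl. dd k) \<le> Delta alpha cl" if cl: "is_cycle K cl" "set cl \<subseteq> S" for cl
  proof -
    have dist: "distinct cl" "cl \<noteq> []" using cl by (auto simp: is_cycle_def)
    have "(\<Sum>k\<in>set cl. dd k) = sum_list (map dd cl)"
      by (rule sum_list_distinct_conv_sum_set[OF dist(1), symmetric])
    also have "\<dots> = sum_list (map (\<lambda>k. u k + v k) cl)"
      using cl(2) by (intro arg_cong[where f=sum_list] map_cong) (auto simp: dd_def)
    also have "\<dots> = sum_list (map u cl) + sum_list (map v (rotate1 cl))"
      by (simp add: sum_list_addf rotate1_map[symmetric] sum_list_rotate1)
    also have "\<dots> = sum_list (map2 (\<lambda>i j. u i + v j) cl (rotate1 cl))"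
      by (rule sum_list_map2_add[symmetric]) simp
    also have "\<dots> \<le> sum_list (map2 c cl (rotate1 cl))"
      unfolding zip_map_fst_snd
    proof (rule sum_list_mono)
      fix q assume q: "q \<in> set (zip cl (rotate1 cl))"
      have "fst q \<in> set cl" using set_zip_leftD[of "fst q" "snd q" cl "rotate1 cl"] q by simp
      moreover have "snd q \<in> set (rotate1 cl)" using set_zip_rightD[of "fst q" "snd q" cl "rotate1 cl"] q by simp
      ultimately have "fst q \<in> S" "snd q \<in> S" using cl(2) by auto
      then show "(case q of (i, j) \<Rightarrow> u i + v j) \<le> (case q of (x, y) \<Rightarrow> c x y)"
        using uv by (cases q) auto
    qed
    also have "\<dots> = Delta alpha cl" by (rule Delta_eq[OF dist, symmetric])
    finally show ?thesis .
  qed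
  then have cyc: "\<forall>cl. is_cycle K cl \<and> set cl \<subseteq> S \<longrightarrow> (\<Sum>k\<in>set cl. dd k) \<le> Delta alpha cl"
    by blast
  have out: "\<forall>k. k \<notin> S \<longrightarrow> dd k = 0" by (simp add: dd_def)
  have nn: "\<forall>k\<in>S. dd k \<ge> 0" using d_nonneg by (simp add: dd_def)
  show ?thesis unfolding D_PTIN_def using cyc out nn by (intro CollectI conjI)
qed

end

theorem theorem5:
  fixes K :: nat and alpha :: "nat \<Rightarrow> nat \<Rightarrow> real" and S :: "nat set"
  assumes "SLS K alpha"
    and "S \<subseteq> {..<K}"
  shows "\<exists>P. cyclic_partition K S P \<and>
             D_Sigma_PTIN K alpha S = (\<Sum>l<length P. Delta alpha (P ! l))"
proof -
  interpret sls_setup K alpha S using assms by unfold_locales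
  have fin: "finite (cost ` {p. p permutes S})" using finite_permutations[OF finS] by simp
  have ne: "cost ` {p. p permutes S} \<noteq> {}" using permutes_id by blast
  obtain \<sigma>0 where s0: "\<sigma>0 permutes S" and m: "cost \<sigma>0 = Min (cost ` {p. p permutes S})"
    using Min_in[OF fin ne] by auto
  have optm: "\<And>\<tau>. \<tau> permutes S \<Longrightarrow> cost \<sigma>0 \<le> cost \<tau>" using m Min_le[OF fin] by simp
  interpret sls_opt K alpha S \<sigma>0 using s0 optm by unfold_locales
  obtain P where P: "(\<forall>cl\<in>set P. cl \<noteq> [] \<and> distinct cl)"
      "(\<forall>a<length P. \<forall>b<length P. a \<noteq> b \<longrightarrow> set (P!a) \<inter> set (P!b) = {})"
      "(\<Union>cl\<in>set P. set cl) = S"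
      "(\<Sum>l<length P. Delta alpha (P!l)) = (\<Sum>y\<in>S. cst alpha y (\<sigma>0 y))"
    using decomp[OF finS s0] by blast
  have cp1: "\<forall>c\<in>set P. is_cycle K c"
  proof
    fix c assume c: "c \<in> set P"
    then have "set c \<subseteq> S" using P(3) by blast
    then show "is_cycle K c" using c P(1) SK unfolding is_cycle_def by blast
  qed
  have cp: "cyclic_partition K S P" unfolding cyclic_partition_def using cp1 P(2,3) by (intro conjI)
  have "D_Sigma_PTIN K alpha S = cost \<sigma>0"
    unfolding D_Sigma_PTIN_def
  proof (rule Greatest_equality)
    show "cost \<sigma>0 \<in> (\<lambda>d. \<Sum>k\<in>S. d k) ` D_PTIN K alpha S"
      by (rule image_eqI[of _ _ dd]) (use dd_sum dd_in in auto)
  next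
    fix y assume "y \<in> (\<lambda>d. \<Sum>k\<in>S. d k) ` D_PTIN K alpha S"
    then obtain d where "d \<in> D_PTIN K alpha S" "y = (\<Sum>k\<in>S. d k)" by auto
    then show "y \<le> cost \<sigma>0" using upper[OF cp] P(4) by (simp add: cost_def)
  qed
  then show ?thesis using cp P(4) unfolding cost_def by (intro exI[of _ P]) simp
qed

end
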